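(* Let $J'\subseteq J$ be nonempty, $t_o\in[0,T-\sum_{j\in J'}p_j]$, and let $\alpha$, $c_1<\dots<c_m$, $M$ and $B_\alpha$ be as in the context. Let $1\le q<m$, $J_l=\{j\in J'\setminus\{\alpha\}:M(j)\le q\}$, $J_r=\{j\in J':M(j)>q\}$ and $s=t_o+\sum_{j\in J_l}p_j$. If $c_q\le s<c_{q+1}$ and $s\notin B_\alpha$, then there exists a partial potential schedule of $J'$ starting at $t_o$ in which all jobs of $J_l$ are processed before $\alpha$, job $\alpha$ starts at time $s$, and all jobs of $J_r$ are processed after $\alpha$.
   Context: $J$ is a finite set of jobs; job $j$ has processing time $p_j>0$ and weight $w_j>0$; $T=\sum_{j\in J}p_j$. For $J'\subseteq J$ and $t_o\ge0$, a partial schedule of $J'$ starting at $t_o$ is an ordering of $J'$ processed consecutively without idle time from time $t_o$; job $j$ has (absolute) start time $t_j$. For $t\ge 0$, $\varphi_j(t)=\frac{w_j}{p_j(p_j+t)}$. For jobs $i,j$ with $w_ip_j\neq w_jp_i$, $t^*_{ij}=\frac{w_jp_i^2-w_ip_j^2}{w_ip_j-w_jp_i}$ (the unique real $t$ with $\varphi_i(t)=\varphi_j(t)$). Dominance rule: for an interval $I\subseteq[0,\infty)$, the relation "$i$ dominates $j$ on $I$" is violated by a (partial) schedule if $j$ is processed before $i$ and both $t_j\in I$ and $t_i-p_j\in I$. The rule contains, for each pair of distinct jobs $i,j$ with $(p_i,w_i)\ne(p_j,w_j)$: (1) if $\varphi_i(t)\ge\varphi_j(t)$ for all $t\ge 0$,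 "$i$ dominates $j$ on $[0,\infty)$"; (2) otherwise, if $\varphi_j(t)\ge\varphi_i(t)$ for all $t\ge0$, "$j$ dominates $i$ on $[0,\infty)$"; (3) otherwise, labelling the pair so that $\varphi_i(0)>\varphi_j(0)$, $t^*_{ij}>0$ is defined and the rule contains "$i$ dominates $j$ on $[0,t^*_{ij})$" and "$j$ dominates $i$ on $[t^*_{ij},\infty)$". A partial schedule of $J'$ is a partial potential schedule if it violates no relation of the rule between two jobs of $J'$. Banned set: for $i\in J$, $B_i$ is the union over all $j\in J\setminus\{i\}$ with $\varphi_i(0)>\varphi_j(0)$, $w_ip_j\ne w_jp_i$ and $t^*_{ij}\in(0,T)$ of the intervals $[t^*_{ij},t^*_{ij}+p_j)$. Subproblem data: $t_e=t_o+\sum_{j\in J'}p_j$; $\alpha\in J'$ maximizes $\varphi_i(t_o)$ over $i\in J'$, ties broken in favour of maximum $\varphi_i(t_e)$; for $j\in J'\setminus\{\alpha\}$ with $t^*_{\alpha j}$ defined, $c_{\alpha j}=t^*_{\alpha j}+p_j$; $C=\{c_{\alpha j}: j\in J'\setminus\{\alpha\},\ t^*_{\alpha j}\text{ defined},\ c_{\alpha j}\in(t_o,t_e)\}\cup\{t_o,t_e\}$ with distinct elements $t_o=c_1<\dots<c_m=t_e$; $M(\alpha)=1$, and for $j\neq\alpha$, $M(j)=r$ if $t^*_{\alpha j}$ is defined, $t^*_{\alpha j}\in(t_o,t_e)$ and $c_{\alpha j}=c_r$ for some $r\le m$, and $M(j)=|J'|+1$ otherwise. *)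

theory Defs
  imports Main "HOL.Real"
begin

text \<open>Jobs have type 'a; processing times p and weights w are functions 'a => real.
A (partial) schedule is a list of jobs, processed consecutively from time t0.\<close>

definition phi :: "('a \<Rightarrow> real) \<Rightarrow> ('a \<Rightarrow> real) \<Rightarrow> 'a \<Rightarrow> real \<Rightarrow> real" where
  "phi p w j t = w j / (p j * (p j + t))"

definition tstar :: "('a \<Rightarrow> real) \<Rightarrow> ('a \<Rightarrow> real) \<Rightarrow> 'a \<Rightarrow> 'a \<Rightarrow> real" where
  "tstar p w i j = (w j * (p i)^2 - w i * (p j)^2) / (w i * p j - w j * p i)"

text \<open>The dominance rule for the job set J: rule_dom p w J i j I holds iff
the rule contains the relation "i dominates j on I".\<close>
definition rule_dom :: "('a \<Rightarrow> real) \<Rightarrow> ('a \<Rightarrow> real) \<Rightarrow> 'a set \<Rightarrow> 'a \<Rightarrow> 'a \<Rightarrow> real set \<Rightarrow> bool" where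
  "rule_dom p w J i j I \<longleftrightarrow>
     i \<in> J \<and> j \<in> J \<and> i \<noteq> j \<and> (p i, w i) \<noteq> (p j, w j) \<and>
     ( ((\<forall>t\<ge>0. phi p w i t \<ge> phi p w j t) \<and> I = {0..})
     \<or> (\<not> (\<forall>t\<ge>0. phi p w i t \<ge> phi p w j t) \<and> \<not> (\<forall>t\<ge>0. phi p w j t \<ge> phi p w i t) \<and>
          phi p w i 0 > phi p w j 0 \<and> I = {0..<tstar p w i j})
     \<or> (\<not> (\<forall>t\<ge>0. phi p w i t \<ge> phi p w j t) \<and> \<not> (\<forall>t\<ge>0. phi p w j t \<ge> phi p w i t) \<and>
          phi p w j 0 > phi p w i 0 \<and> I = {tstar p w j i..}))"

definition start_at :: "('a \<Rightarrow> real) \<Rightarrow> real \<Rightarrow> 'a list \<Rightarrow> nat \<Rightarrow> real" where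
  "start_at p t0 \<sigma> k = t0 + sum_list (map p (take k \<sigma>))"

definition before :: "'a list \<Rightarrow> 'a \<Rightarrow> 'a \<Rightarrow> bool" where
  "before \<sigma> x y \<longleftrightarrow> (\<exists>k l. k < l \<and> l < length \<sigma> \<and> \<sigma> ! k = x \<and> \<sigma> ! l = y)"

definition violates :: "('a \<Rightarrow> real) \<Rightarrow> real \<Rightarrow> 'a list \<Rightarrow> 'a \<Rightarrow> 'a \<Rightarrow> real set \<Rightarrow> bool" where
  "violates p t0 \<sigma> i j I \<longleftrightarrow>
     (\<exists>k l. k < l \<and> l < length \<sigma> \<and> \<sigma> ! k = j \<and> \<sigma> ! l = i \<and>
            start_at p t0 \<sigma> k \<in> I \<and> start_at p t0 \<sigma> l - p j \<in> I)"

definition partial_schedule :: "'a set \<Rightarrow> 'a list \<Rightarrow> bool" where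
  "partial_schedule J' \<sigma> \<longleftrightarrow> distinct \<sigma> \<and> set \<sigma> = J'"

definition partial_potential_schedule ::
  "('a \<Rightarrow> real) \<Rightarrow> ('a \<Rightarrow> real) \<Rightarrow> 'a set \<Rightarrow> 'a set \<Rightarrow> real \<Rightarrow> 'a list \<Rightarrow> bool" where
  "partial_potential_schedule p w J J' t0 \<sigma> \<longleftrightarrow>
     partial_schedule J' \<sigma> \<and>
     (\<forall>i\<in>J'. \<forall>j\<in>J'. \<forall>I. rule_dom p w J i j I \<longrightarrow> \<not> violates p t0 \<sigma> i j I)"

definition banned :: "('a \<Rightarrow> real) \<Rightarrow> ('a \<Rightarrow> real) \<Rightarrow> 'a set \<Rightarrow> 'a \<Rightarrow> real set" where
  "banned p w J i = \<Union> {{tstar p w i j ..< tstar p w i j + p j} | j.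
      j \<in> J - {i} \<and> phi p w i 0 > phi p w j 0 \<and> w i * p j \<noteq> w j * p i \<and>
      tstar p w i j \<in> {0<..<sum p J}}"

definition t_end :: "('a \<Rightarrow> real) \<Rightarrow> 'a set \<Rightarrow> real \<Rightarrow> real" where
  "t_end p J' t0 = t0 + sum p J'"

definition is_alpha :: "('a \<Rightarrow> real) \<Rightarrow> ('a \<Rightarrow> real) \<Rightarrow> 'a set \<Rightarrow> real \<Rightarrow> 'a \<Rightarrow> bool" where
  "is_alpha p w J' t0 a \<longleftrightarrow> a \<in> J' \<and>
     (\<forall>i\<in>J'. phi p w i t0 \<le> phi p w a t0 \<and>
        (phi p w i t0 = phi p w a t0 \<longrightarrow> phi p w i (t_end p J' t0) \<le> phi p w a (t_end p J' t0)))"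

definition tstar_defined :: "('a \<Rightarrow> real) \<Rightarrow> ('a \<Rightarrow> real) \<Rightarrow> 'a \<Rightarrow> 'a \<Rightarrow> bool" where
  "tstar_defined p w i j \<longleftrightarrow> w i * p j \<noteq> w j * p i"

definition c_val :: "('a \<Rightarrow> real) \<Rightarrow> ('a \<Rightarrow> real) \<Rightarrow> 'a \<Rightarrow> 'a \<Rightarrow> real" where
  "c_val p w a j = tstar p w a j + p j"

definition Cset :: "('a \<Rightarrow> real) \<Rightarrow> ('a \<Rightarrow> real) \<Rightarrow> 'a set \<Rightarrow> real \<Rightarrow> 'a \<Rightarrow> real set" where
  "Cset p w J' t0 a =
     {c_val p w a j | j. j \<in> J' - {a} \<and> tstar_defined p w a j \<and>
         c_val p w a j \<in> {t0<..<t_end p J' t0}} \<union> {t0, t_end p J' t0}"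

definition m_card :: "('a \<Rightarrow> real) \<Rightarrow> ('a \<Rightarrow> real) \<Rightarrow> 'a set \<Rightarrow> real \<Rightarrow> 'a \<Rightarrow> nat" where
  "m_card p w J' t0 a = card (Cset p w J' t0 a)"

text \<open>c r for r = 1..m: the r-th smallest element of C (1-based).\<close>
definition cseq :: "('a \<Rightarrow> real) \<Rightarrow> ('a \<Rightarrow> real) \<Rightarrow> 'a set \<Rightarrow> real \<Rightarrow> 'a \<Rightarrow> nat \<Rightarrow> real" where
  "cseq p w J' t0 a r = sorted_list_of_set (Cset p w J' t0 a) ! (r - 1)"

definition Mfun :: "('a \<Rightarrow> real) \<Rightarrow> ('a \<Rightarrow> real) \<Rightarrow> 'a set \<Rightarrow> real \<Rightarrow> 'a \<Rightarrow> 'a \<Rightarrow> nat" where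
  "Mfun p w J' t0 a j =
     (if j = a then 1
      else if tstar_defined p w a j \<and> tstar p w a j \<in> {t0<..<t_end p J' t0} \<and>
              (\<exists>r. 1 \<le> r \<and> r \<le> m_card p w J' t0 a \<and> cseq p w J' t0 a r = c_val p w a j)
      then (THE r. 1 \<le> r \<and> r \<le> m_card p w J' t0 a \<and> cseq p w J' t0 a r = c_val p w a j)
      else card J' + 1)"

end

theory Submission
  imports Defs
begin
definition dd :: "('a \<Rightarrow> real) \<Rightarrow> ('a \<Rightarrow> real) \<Rightarrow> 'a \<Rightarrow> 'a \<Rightarrow> real \<Rightarrow> real" where
  "dd p w i j t = w i * p j * (p j + t) - w j * p i * (p i + t)"

lemma dd_lin: "dd p w i j t = (w i * (p j)^2 - w j * (p i)^2) + (w i * p j - w j * p i) * t"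
  by (simp add: dd_def algebra_simps power2_eq_square)

lemma dd_swap: "dd p w i j t = - dd p w j i t"
  by (simp add: dd_def)

lemma tstar_sym: "tstar p w i j = tstar p w j i"
proof -
  have "(w j * (p i)^2 - w i * (p j)^2) / (w i * p j - w j * p i)
      = (-(w j * (p i)^2 - w i * (p j)^2)) / (-(w i * p j - w j * p i))"
    by (simp only: minus_divide_divide)
  then show ?thesis by (simp add: tstar_def algebra_simps)
qed

lemma dd_tstar: assumes "w i * p j - w j * p i \<noteq> 0"
  shows "dd p w i j t = (w i * p j - w j * p i) * (t - tstar p w i j)"
  using assms by (simp add: dd_lin tstar_def field_simps)

lemma phi_le_iff: assumes "p i > 0" "p j > 0" "t \<ge> 0"
  shows "phi p w j t \<le> phi p w i t \<longleftrightarrow> 0 \<le> dd p w i j t"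
proof -
  have a: "p j * (p j + t) > 0" "p i * (p i + t) > 0" using assms by auto
  have "phi p w j t \<le> phi p w i t \<longleftrightarrow> w j * (p i * (p i + t)) \<le> w i * (p j * (p j + t))"
    unfolding phi_def using a by (simp add: divide_le_eq le_divide_eq field_simps)
  also have "\<dots> \<longleftrightarrow> 0 \<le> dd p w i j t" by (simp add: dd_def algebra_simps)
  finally show ?thesis .
qed

lemma phi_less_iff: assumes "p i > 0" "p j > 0" "t \<ge> 0"
  shows "phi p w j t < phi p w i t \<longleftrightarrow> 0 < dd p w i j t"
  using phi_le_iff[where p=p and i=j and j=i and t=t and w=w] assms dd_swap[of p w i j t] by linarith

lemma beats:
  assumes rd: "rule_dom p w J i j I" and t0I: "t0 \<in> I" and t0: "t0 \<ge> 0"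
    and pos: "p i > 0" "p j > 0" "w i > 0" "w j > 0"
  shows "0 < dd p w i j t0 \<or> (dd p w i j t0 = 0 \<and> 0 < dd p w i j (t0+1))"
proof -
  define A where "A = w i * (p j)^2 - w j * (p i)^2"
  define B where "B = w i * p j - w j * p i"
  have lin: "\<And>t. dd p w i j t = A + B * t" unfolding A_def B_def by (rule dd_lin)
  have le: "\<And>t. t \<ge> 0 \<Longrightarrow> phi p w j t \<le> phi p w i t \<longleftrightarrow> 0 \<le> dd p w i j t"
    using phi_le_iff[where p=p and i=i and j=j and w=w] pos by blast
  have le2: "\<And>t. t \<ge> 0 \<Longrightarrow> phi p w i t \<le> phi p w j t \<longleftrightarrow> 0 \<le> dd p w j i t"
    using phi_le_iff[where p=p and i=j and j=i and w=w] pos by blast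
  have lt: "\<And>t. t \<ge> 0 \<Longrightarrow> phi p w j t < phi p w i t \<longleftrightarrow> 0 < dd p w i j t"
    using phi_less_iff[where p=p and i=i and j=j and w=w] pos by blast
  have lt2: "\<And>t. t \<ge> 0 \<Longrightarrow> phi p w i t < phi p w j t \<longleftrightarrow> 0 < dd p w j i t"
    using phi_less_iff[where p=p and i=j and j=i and w=w] pos by blast
  have sw: "\<And>t. dd p w j i t = - dd p w i j t" by (rule dd_swap)
  from rd have ne: "(p i, w i) \<noteq> (p j, w j)" unfolding rule_dom_def by blast
  consider (c1) "\<forall>t\<ge>0. phi p w i t \<ge> phi p w j t" "I = {0..}"
    | (c2) "\<not> (\<forall>t\<ge>0. phi p w i t \<ge> phi p w j t)" "phi p w i 0 > phi p w j 0" "I = {0..<tstar p w i j}"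
    | (c3) "\<not> (\<forall>t\<ge>0. phi p w j t \<ge> phi p w i t)" "phi p w j 0 > phi p w i 0" "I = {tstar p w j i..}"
    using rd unfolding rule_dom_def by blast
  then show ?thesis
  proof cases
    case c1
    show ?thesis
    proof (rule ccontr)
      assume "\<not> ?thesis"
      moreover have "0 \<le> dd p w i j t0" "0 \<le> dd p w i j (t0+1)" using c1(1) le[of t0] le[of "t0+1"] t0 by auto
      ultimately have "dd p w i j t0 = 0" "dd p w i j (t0+1) = 0" by auto
      then have B0: "B = 0" using lin[of t0] lin[of "t0+1"] by (simp add: algebra_simps)
      then have A0: "A = 0" using lin[of t0] \<open>dd p w i j t0 = 0\<close> by simp
      have e1: "w i * p j = w j * p i" using B0 B_def by simp
      have "w i * p j * p j = w j * p i * p i" using A0 A_def by (simp add: power2_eq_square algebra_simps)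
      also have "\<dots> = w i * p j * p i" using e1 by simp
      finally have "p j = p i" using pos by simp
      then have "w i = w j" using e1 pos by simp
      with \<open>p j = p i\<close> ne show False by simp
    qed
  next
    case c2
    obtain t1 where t1: "t1 \<ge> 0" "dd p w i j t1 < 0" using c2(1) le by force
    have A: "A > 0" using lt[of 0] c2(2) lin[of 0] by simp
    have Bn: "B < 0"
    proof (rule ccontr)
      assume "\<not> B < 0" then have "B * t1 \<ge> 0" using t1 by simp
      then show False using t1 lin[of t1] A by simp
    qed
    have "t0 < tstar p w i j" using t0I c2 by simp
    moreover have "dd p w i j t0 = B * (t0 - tstar p w i j)" using dd_tstar[of w i p j t0] Bn B_def by simp
    ultimately have "dd p w i j t0 > 0" using Bn by (simp add: mult_neg_neg)
    then show ?thesis by simp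
  next
    case c3
    obtain t1 where t1: "t1 \<ge> 0" "dd p w j i t1 < 0" using c3(1) le2 by force
    have A: "A < 0" using lt2[of 0] c3(2) lin[of 0] sw[of 0] by simp
    have Bp: "B > 0"
    proof (rule ccontr)
      assume "\<not> B > 0" then have "B * t1 \<le> 0" using t1 by (simp add: mult_nonpos_nonneg)
      then show False using t1 lin[of t1] sw[of t1] A by simp
    qed
    have "t0 \<ge> tstar p w i j" using t0I c3 tstar_sym[of p w i j] by simp
    moreover have "\<And>t. dd p w i j t = B * (t - tstar p w i j)" using dd_tstar[of w i p j] Bp B_def by simp
    ultimately have "dd p w i j t0 \<ge> 0" "dd p w i j (t0+1) > 0" using Bp by auto
    then show ?thesis by auto
  qed
qed

lemma rule_dom_convex:
  assumes "rule_dom p w J i j I" "a \<in> I" "b \<in> I" "a \<le> t" "t \<le> b"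
  shows "t \<in> I"
  using assms unfolding rule_dom_def by auto

lemma start_at_Cons0[simp]: "start_at p t0 (x#xs) 0 = t0"
  by (simp add: start_at_def)

lemma start_at_Cons_Suc[simp]: "start_at p t0 (x#xs) (Suc k) = start_at p (t0 + p x) xs k"
  by (simp add: start_at_def)

definition nv :: "('a \<Rightarrow> real) \<Rightarrow> ('a \<Rightarrow> real) \<Rightarrow> 'a set \<Rightarrow> real \<Rightarrow> 'a list \<Rightarrow> bool" where
  "nv p w J t0 \<sigma> \<longleftrightarrow> (\<forall>i j I k l. rule_dom p w J i j I \<longrightarrow> k < l \<longrightarrow> l < length \<sigma> \<longrightarrow>
      \<sigma>!k = j \<longrightarrow> \<sigma>!l = i \<longrightarrow> \<not> (start_at p t0 \<sigma> k \<in> I \<and> start_at p t0 \<sigma> l - p j \<in> I))"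

lemma lex_max:
  fixes f g :: "'a \<Rightarrow> real"
  assumes "finite S" "S \<noteq> {}"
  shows "\<exists>j\<in>S. \<forall>i\<in>S. f i \<le> f j \<and> (f i = f j \<longrightarrow> g i \<le> g j)"
proof -
  define m where "m = Max (f ` S)"
  define S1 where "S1 = {i\<in>S. f i = m}"
  have "m \<in> f ` S" unfolding m_def using assms by simp
  then have ne: "S1 \<noteq> {}" unfolding S1_def by auto
  have fin: "finite S1" unfolding S1_def using assms by simp
  have "Max (g ` S1) \<in> g ` S1" using ne fin by simp
  then obtain j where j: "j \<in> S1" "g j = Max (g ` S1)" by auto
  have mx: "\<And>i. i \<in> S \<Longrightarrow> f i \<le> m" unfolding m_def using assms by simp
  show ?thesis
  proof (intro bexI[of _ j] ballI conjI impI)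
    show "j \<in> S" using j S1_def by simp
    fix i assume i: "i \<in> S"
    show "f i \<le> f j" using mx[OF i] j S1_def by simp
    assume "f i = f j"
    then have "i \<in> S1" using i j S1_def by simp
    then show "g i \<le> g j" using j fin by simp
  qed
qed

lemma greedy:
  assumes "finite S" "\<forall>j\<in>S. p j > 0 \<and> w j > 0" "t0 \<ge> 0"
  shows "\<exists>\<sigma>. distinct \<sigma> \<and> set \<sigma> = S \<and> nv p w J t0 \<sigma>"
  using assms
proof (induction "card S" arbitrary: S t0 rule: less_induct)
  case less
  show ?case
  proof (cases "S = {}")
    case True
    then show ?thesis by (intro exI[of _ "[]"]) (simp add: nv_def)
  next
    case False
    obtain j where j: "j \<in> S" and jmax: "\<forall>i\<in>S. phi p w i t0 \<le> phi p w j t0 \<and>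
        (phi p w i t0 = phi p w j t0 \<longrightarrow> phi p w i (t0+1) \<le> phi p w j (t0+1))"
      using lex_max[OF less.prems(1) False, of "\<lambda>i. phi p w i t0" "\<lambda>i. phi p w i (t0+1)"] by blast
    have "card (S - {j}) < card S" using j less.prems(1) by (meson card_Diff1_less)
    moreover have "t0 + p j \<ge> 0" using less.prems j by (smt (verit))
    ultimately obtain \<sigma> where s: "distinct \<sigma>" "set \<sigma> = S - {j}" "nv p w J (t0 + p j) \<sigma>"
      using less.hyps[of "S - {j}" "t0 + p j"] less.prems by auto
    show ?thesis
    proof (intro exI[of _ "j#\<sigma>"] conjI)
      show "distinct (j#\<sigma>)" using s by simp
      show "set (j#\<sigma>) = S" using s j by auto
      show "nv p w J t0 (j#\<sigma>)" unfolding nv_def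
      proof (intro allI impI notI)
        fix i j' I k l
        assume rd: "rule_dom p w J i j' I" and kl: "k < l" and ll: "l < length (j#\<sigma>)"
          and jk: "(j#\<sigma>)!k = j'" and il: "(j#\<sigma>)!l = i"
          and v: "start_at p t0 (j#\<sigma>) k \<in> I \<and> start_at p t0 (j#\<sigma>) l - p j' \<in> I"
        obtain l' where l': "l = Suc l'" using kl by (cases l) auto
        show False
        proof (cases k)
          case 0
          then have jj: "j' = j" using jk by simp
          have "i = \<sigma>!l'" "l' < length \<sigma>" using il l' ll by auto
          then have iS: "i \<in> S" using s(2) nth_mem by blast
          have pos: "p i > 0" "p j > 0" "w i > 0" "w j > 0" using iS j less.prems by auto
          have "t0 \<in> I" using v 0 by simp
          from beats[OF rd[unfolded jj] this less.prems(3) pos]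
          have "0 < dd p w i j t0 \<or> (dd p w i j t0 = 0 \<and> 0 < dd p w i j (t0+1))" .
          moreover have "phi p w j t0 < phi p w i t0 \<longleftrightarrow> 0 < dd p w i j t0"
            by (rule phi_less_iff) (use pos less.prems(3) in auto)
          moreover have "phi p w j t0 \<le> phi p w i t0 \<longleftrightarrow> 0 \<le> dd p w i j t0"
            by (rule phi_le_iff) (use pos less.prems(3) in auto)
          moreover have "phi p w j (t0+1) < phi p w i (t0+1) \<longleftrightarrow> 0 < dd p w i j (t0+1)"
            by (rule phi_less_iff) (use pos less.prems(3) in auto)
          ultimately show False using jmax iS by force
        next
          case (Suc k')
          have "\<not> (start_at p (t0 + p j) \<sigma> k' \<in> I \<and> start_at p (t0 + p j) \<sigma> l' - p j' \<in> I)"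
            using s(3) rd kl ll jk il Suc l' unfolding nv_def by simp
          then show False using v Suc l' by simp
        qed
      qed
    qed
  qed
qed

lemma start_at_app_le: "k \<le> length xs \<Longrightarrow> start_at p t0 (xs @ ys) k = start_at p t0 xs k"
  by (simp add: start_at_def)

lemma start_at_mid: "start_at p t0 (xs @ y # ys) (length xs) = t0 + sum_list (map p xs)"
  by (simp add: start_at_def)

lemma start_at_right:
  "start_at p t0 (xs @ y # ys) (Suc (length xs) + k) = start_at p (t0 + sum_list (map p xs) + p y) ys k"
  by (simp add: start_at_def)

lemma start_at_end:
  assumes "k < length xs" "\<forall>x\<in>set xs. p x \<ge> 0"
  shows "start_at p t0 xs k + p (xs!k) \<le> t0 + sum_list (map p xs)"
proof -
  have "xs = take k xs @ (xs!k # drop (Suc k) xs)" using assms(1)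
    by (simp add: Cons_nth_drop_Suc)
  then have e: "sum_list (map p xs) = sum_list (map p (take k xs)) + p (xs!k) + sum_list (map p (drop (Suc k) xs))"
    by (metis map_append list.map(2) sum_list_append sum_list.Cons add.assoc)
  have "sum_list (map p (drop (Suc k) xs)) \<ge> 0"
    using assms(2) by (intro sum_list_nonneg) (auto dest: in_set_dropD)
  then show ?thesis using e by (simp add: start_at_def)
qed

lemma start_at_ge:
  assumes "\<forall>x\<in>set xs. p x \<ge> 0"
  shows "t0 \<le> start_at p t0 xs k"
  using assms unfolding start_at_def by (auto intro!: sum_list_nonneg dest!: in_set_takeD)

theorem lemma8:
  fixes J J' :: "'a set" and p w :: "'a \<Rightarrow> real" and t\<^sub>o s :: real and \<alpha> :: 'a and q :: nat
    and Jl Jr :: "'a set"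
  assumes "finite J"
    and "\<And>j. j \<in> J \<Longrightarrow> p j > 0"
    and "\<And>j. j \<in> J \<Longrightarrow> w j > 0"
    and "J' \<subseteq> J" and "J' \<noteq> {}"
    and "0 \<le> t\<^sub>o" and "t\<^sub>o \<le> sum p J - sum p J'"
    and "is_alpha p w J' t\<^sub>o \<alpha>"
    and "1 \<le> q" and "q < m_card p w J' t\<^sub>o \<alpha>"
    and "Jl = {j \<in> J' - {\<alpha>}. Mfun p w J' t\<^sub>o \<alpha> j \<le> q}"
    and "Jr = {j \<in> J'. Mfun p w J' t\<^sub>o \<alpha> j > q}"
    and "s = t\<^sub>o + sum p Jl"
    and "cseq p w J' t\<^sub>o \<alpha> q \<le> s" and "s < cseq p w J' t\<^sub>o \<alpha> (q + 1)"
    and "s \<notin> banned p w J \<alpha>"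
  shows "\<exists>\<sigma>. partial_potential_schedule p w J J' t\<^sub>o \<sigma> \<and>
            (\<forall>j\<in>Jl. before \<sigma> j \<alpha>) \<and>
            (\<exists>k<length \<sigma>. \<sigma> ! k = \<alpha> \<and> start_at p t\<^sub>o \<sigma> k = s) \<and>
            (\<forall>j\<in>Jr. before \<sigma> \<alpha> j)"
proof -
  note pJ = assms(2) and wJ = assms(3)
  have finJ': "finite J'" using assms(1,4) finite_subset by blast
  have aJ': "\<alpha> \<in> J'" using assms(8) unfolding is_alpha_def by blast
  have pw: "\<And>j. j \<in> J' \<Longrightarrow> p j > 0 \<and> w j > 0" using assms(2,3,4) by blast
  define te where "te = t\<^sub>o + sum p J'"
  have teq: "t_end p J' t\<^sub>o = te" unfolding te_def t_end_def by simp
  define C where "C = Cset p w J' t\<^sub>o \<alpha>"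
  define L where "L = sorted_list_of_set C"
  define m where "m = m_card p w J' t\<^sub>o \<alpha>"
  have sumpos: "sum p J' > 0" using finJ' assms(5) pw by (intro sum_pos) auto
  have te_gt: "t\<^sub>o < te" using sumpos te_def by simp
  have te_le: "te \<le> sum p J" using assms(7) te_def by simp
  have te0: "te \<ge> 0" using te_gt assms(6) by simp
  have amax: "\<And>i. i \<in> J' \<Longrightarrow> 0 \<le> dd p w \<alpha> i t\<^sub>o"
  proof -
    fix i assume i: "i \<in> J'"
    have "phi p w i t\<^sub>o \<le> phi p w \<alpha> t\<^sub>o" using assms(8) i unfolding is_alpha_def by blast
    then show "0 \<le> dd p w \<alpha> i t\<^sub>o" using phi_le_iff[of p \<alpha> i t\<^sub>o w] pw[OF i] pw[OF aJ'] assms(6) by simp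
  qed
  have atie: "\<And>i. i \<in> J' \<Longrightarrow> dd p w \<alpha> i t\<^sub>o = 0 \<Longrightarrow> 0 \<le> dd p w \<alpha> i te"
  proof -
    fix i assume i: "i \<in> J'" and z: "dd p w \<alpha> i t\<^sub>o = 0"
    have "phi p w i t\<^sub>o \<le> phi p w \<alpha> t\<^sub>o" using z phi_le_iff[of p \<alpha> i t\<^sub>o w] pw[OF i] pw[OF aJ'] assms(6) by simp
    moreover have "phi p w \<alpha> t\<^sub>o \<le> phi p w i t\<^sub>o" using z dd_swap[of p w \<alpha> i t\<^sub>o]
        phi_le_iff[of p i \<alpha> t\<^sub>o w] pw[OF i] pw[OF aJ'] assms(6) by simp
    ultimately have "phi p w i te \<le> phi p w \<alpha> te" using assms(8) i teq unfolding is_alpha_def by auto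
    then show "0 \<le> dd p w \<alpha> i te" using phi_le_iff[of p \<alpha> i te w] pw[OF i] pw[OF aJ'] te0 by simp
  qed
  have Csub: "C \<subseteq> c_val p w \<alpha> ` (J' - {\<alpha>}) \<union> {t\<^sub>o, te}"
    unfolding C_def Cset_def teq by auto
  have finC: "finite C" using finite_subset[OF Csub] finJ' by simp
  have cardC: "card C \<le> card J' + 1"
  proof -
    have "card C \<le> card (c_val p w \<alpha> ` (J' - {\<alpha>}) \<union> {t\<^sub>o, te})" using Csub finJ' by (intro card_mono) auto
    also have "\<dots> \<le> card (c_val p w \<alpha> ` (J' - {\<alpha>})) + card {t\<^sub>o, te}" by (rule card_Un_le)
    also have "\<dots> \<le> card (J' - {\<alpha>}) + 2" by (intro add_mono card_image_le) (auto simp: finJ' card_insert_le_m1)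
    also have "\<dots> = card J' + 1" using aJ' finJ' card_gt_0_iff[of J'] by auto
    finally show ?thesis .
  qed
  have mC: "m = card C" unfolding m_def m_card_def C_def by simp
  have sL: "sorted_wrt (<) L" unfolding L_def by simp
  have setL: "set L = C" unfolding L_def using finC by simp
  have lenL: "length L = m" unfolding L_def mC using finC by simp
  have cs: "\<And>r. cseq p w J' t\<^sub>o \<alpha> r = L ! (r - 1)" unfolding cseq_def L_def C_def by simp
  have cmono: "\<And>r r'. 1 \<le> r \<Longrightarrow> r \<le> r' \<Longrightarrow> r' \<le> m \<Longrightarrow> cseq p w J' t\<^sub>o \<alpha> r \<le> cseq p w J' t\<^sub>o \<alpha> r'"
    unfolding cs using sL lenL by (intro sorted_nth_mono) (auto simp: strict_sorted_iff)
  have cstrict: "\<And>r r'. 1 \<le> r \<Longrightarrow> r < r' \<Longrightarrow> r' \<le> m \<Longrightarrow> cseq p w J' t\<^sub>o \<alpha> r < cseq p w J' t\<^sub>o \<alpha> r'"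
    unfolding cs using sL lenL by (intro sorted_wrt_nth_less[where P="(<)"]) auto
  have the_prop: "\<And>c. (\<exists>r. 1 \<le> r \<and> r \<le> m \<and> cseq p w J' t\<^sub>o \<alpha> r = c) \<Longrightarrow>
      (let r0 = (THE r. 1 \<le> r \<and> r \<le> m \<and> cseq p w J' t\<^sub>o \<alpha> r = c) in 1 \<le> r0 \<and> r0 \<le> m \<and> cseq p w J' t\<^sub>o \<alpha> r0 = c)"
  proof -
    fix c assume ex: "\<exists>r. 1 \<le> r \<and> r \<le> m \<and> cseq p w J' t\<^sub>o \<alpha> r = c"
    have uq: "r' = r" if h1: "1 \<le> r \<and> r \<le> m \<and> cseq p w J' t\<^sub>o \<alpha> r = c"
       and h2: "1 \<le> r' \<and> r' \<le> m \<and> cseq p w J' t\<^sub>o \<alpha> r' = c" for r r'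
    proof (rule ccontr)
      assume "r' \<noteq> r"
      then consider "r < r'" | "r' < r" by linarith
      then show False
      proof cases
        case 1 then show False using cstrict[of r r'] h1 h2 by simp
      next
        case 2 then show False using cstrict[of r' r] h1 h2 by simp
      qed
    qed
    obtain r where r: "1 \<le> r \<and> r \<le> m \<and> cseq p w J' t\<^sub>o \<alpha> r = c" using ex by blast
    have "(THE r. 1 \<le> r \<and> r \<le> m \<and> cseq p w J' t\<^sub>o \<alpha> r = c) = r"
      by (rule the_equality) (use r uq in blast)+
    then show "?thesis c" using r by (simp add: Let_def)
  qed
  have qm: "q < card J' + 1" using assms(10) m_def mC cardC by simp
  have Mal: "Mfun p w J' t\<^sub>o \<alpha> \<alpha> = 1" unfolding Mfun_def by simp
  have sJl: "s \<le> te - p \<alpha>"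
  proof -
    have "Jl \<subseteq> J' - {\<alpha>}" using assms(11) by auto
    then have "sum p Jl \<le> sum p (J' - {\<alpha>})" using finJ' pw by (intro sum_mono2) (auto intro: less_imp_le)
    also have "\<dots> = sum p J' - p \<alpha>" using finJ' aJ' by (simp add: sum_diff1)
    finally show ?thesis using assms(13) te_def by simp
  qed
  have ste: "s < te" using sJl pw[OF aJ'] by simp
  have Mdef: "\<And>j. Mfun p w J' t\<^sub>o \<alpha> j = (if j = \<alpha> then 1
      else if tstar_defined p w \<alpha> j \<and> tstar p w \<alpha> j \<in> {t\<^sub>o<..<te} \<and>
              (\<exists>r. 1 \<le> r \<and> r \<le> m \<and> cseq p w J' t\<^sub>o \<alpha> r = c_val p w \<alpha> j)
      then (THE r. 1 \<le> r \<and> r \<le> m \<and> cseq p w J' t\<^sub>o \<alpha> r = c_val p w \<alpha> j)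
      else card J' + 1)"
    unfolding Mfun_def teq m_def by simp
  have Fl: "w \<alpha> * p j - w j * p \<alpha> < 0 \<and> t\<^sub>o < tstar p w \<alpha> j \<and> tstar p w \<alpha> j + p j \<le> s"
    if j: "j \<in> Jl" for j
  proof -
    have jJ: "j \<in> J'" "j \<noteq> \<alpha>" and Mj: "Mfun p w J' t\<^sub>o \<alpha> j \<le> q" using j assms(11) by auto
    have cond: "tstar_defined p w \<alpha> j \<and> tstar p w \<alpha> j \<in> {t\<^sub>o<..<te} \<and>
              (\<exists>r. 1 \<le> r \<and> r \<le> m \<and> cseq p w J' t\<^sub>o \<alpha> r = c_val p w \<alpha> j)"
    proof (rule ccontr)
      assume nc: "\<not> ?thesis"
      have "Mfun p w J' t\<^sub>o \<alpha> j = card J' + 1"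
        by (subst Mdef) (simp only: if_not_P[OF jJ(2)] if_not_P[OF nc])
      then show False using Mj qm by simp
    qed
    define r0 where "r0 = (THE r. 1 \<le> r \<and> r \<le> m \<and> cseq p w J' t\<^sub>o \<alpha> r = c_val p w \<alpha> j)"
    have r0: "1 \<le> r0" "r0 \<le> m" "cseq p w J' t\<^sub>o \<alpha> r0 = c_val p w \<alpha> j"
      using the_prop[of "c_val p w \<alpha> j"] cond unfolding r0_def Let_def by auto
    have "Mfun p w J' t\<^sub>o \<alpha> j = r0"
      by (subst Mdef) (simp only: if_not_P[OF jJ(2)] if_P[OF cond] r0_def)
    then have "r0 \<le> q" using Mj by simp
    then have "cseq p w J' t\<^sub>o \<alpha> r0 \<le> cseq p w J' t\<^sub>o \<alpha> q" using cmono[of r0 q] r0 assms(10) m_def by linarith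
    then have le: "tstar p w \<alpha> j + p j \<le> s" using r0(3) assms(14) unfolding c_val_def by simp
    define B where "B = w \<alpha> * p j - w j * p \<alpha>"
    have Bn0: "B \<noteq> 0" using cond unfolding tstar_defined_def B_def by simp
    have "dd p w \<alpha> j t\<^sub>o = B * (t\<^sub>o - tstar p w \<alpha> j)" using dd_tstar[of w \<alpha> p j t\<^sub>o] Bn0 B_def by simp
    moreover have "0 \<le> dd p w \<alpha> j t\<^sub>o" using amax jJ by simp
    moreover have "t\<^sub>o < tstar p w \<alpha> j" using cond by simp
    ultimately have "B \<le> 0" by (smt (verit) mult_pos_neg)
    then show ?thesis using Bn0 B_def le cond by simp
  qed
  have Fr: "i \<noteq> \<alpha> \<and> ((0 \<le> w \<alpha> * p i - w i * p \<alpha> \<and> 0 \<le> dd p w \<alpha> i t\<^sub>o) \<or>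
             (w \<alpha> * p i - w i * p \<alpha> < 0 \<and> s < tstar p w \<alpha> i))"
    if i: "i \<in> Jr" for i
  proof -
    have iJ: "i \<in> J'" and Mi: "q < Mfun p w J' t\<^sub>o \<alpha> i" using i assms(12) by auto
    have ia: "i \<noteq> \<alpha>" using Mi Mal assms(9) by auto
    define B where "B = w \<alpha> * p i - w i * p \<alpha>"
    have d0: "0 \<le> dd p w \<alpha> i t\<^sub>o" using amax iJ by simp
    show ?thesis
    proof (cases "0 \<le> B")
      case True then show ?thesis using ia d0 B_def by simp
    next
      case False
      then have Bn: "B < 0" by simp
      have td: "tstar_defined p w \<alpha> i" using Bn unfolding tstar_defined_def B_def by simp
      define ts where "ts = tstar p w \<alpha> i"
      have ddt: "\<And>t. dd p w \<alpha> i t = B * (t - ts)" using dd_tstar[of w \<alpha> p i] Bn B_def ts_def by simp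
      have "t\<^sub>o \<le> ts" using d0 ddt[of t\<^sub>o] Bn by (smt (verit) mult_neg_pos)
      moreover have "t\<^sub>o \<noteq> ts"
      proof
        assume e: "t\<^sub>o = ts"
        then have "dd p w \<alpha> i t\<^sub>o = 0" using ddt by simp
        then have "0 \<le> dd p w \<alpha> i te" using atie iJ by simp
        then show False using ddt[of te] Bn te_gt e by (smt (verit) mult_neg_pos)
      qed
      ultimately have tso: "t\<^sub>o < ts" by simp
      have "s < ts"
      proof (rule ccontr)
        assume "\<not> s < ts"
        then have sts: "ts \<le> s" by simp
        have tste: "ts < te" using sts ste by simp
        show False
        proof (cases "ts + p i \<le> s")
          case True
          define c where "c = c_val p w \<alpha> i"
          have c: "c = ts + p i" unfolding c_def c_val_def ts_def by simp
          have "c \<in> {t\<^sub>o<..<te}" using c True ste tso pw[OF iJ] by simp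
          then have "c \<in> C" unfolding C_def Cset_def teq using iJ ia td
            unfolding c_def by blast
          then obtain idx where idx: "idx < length L" "L ! idx = c" using setL by (metis in_set_conv_nth)
          have ex: "\<exists>r. 1 \<le> r \<and> r \<le> m \<and> cseq p w J' t\<^sub>o \<alpha> r = c_val p w \<alpha> i"
            using idx lenL cs[of "Suc idx"] c_def by (intro exI[of _ "Suc idx"]) simp
          define r0 where "r0 = (THE r. 1 \<le> r \<and> r \<le> m \<and> cseq p w J' t\<^sub>o \<alpha> r = c_val p w \<alpha> i)"
          have r0: "1 \<le> r0" "r0 \<le> m" "cseq p w J' t\<^sub>o \<alpha> r0 = c_val p w \<alpha> i"
            using the_prop[of "c_val p w \<alpha> i"] ex unfolding r0_def Let_def by auto
          have cond: "tstar_defined p w \<alpha> i \<and> tstar p w \<alpha> i \<in> {t\<^sub>o<..<te} \<and>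
              (\<exists>r. 1 \<le> r \<and> r \<le> m \<and> cseq p w J' t\<^sub>o \<alpha> r = c_val p w \<alpha> i)"
            using td tso tste ex ts_def by simp
          have "Mfun p w J' t\<^sub>o \<alpha> i = r0"
            by (subst Mdef) (simp only: if_not_P[OF ia] if_P[OF cond] r0_def)
          then have "q + 1 \<le> r0" using Mi by simp
          then have "cseq p w J' t\<^sub>o \<alpha> (q+1) \<le> cseq p w J' t\<^sub>o \<alpha> r0" using cmono[of "q+1" r0] r0 by simp
          then show False using r0(3) c_def c True assms(15) by simp
        next
          case False
          have "s \<in> {ts ..< ts + p i}" using False sts by simp
          moreover have "{ts ..< ts + p i} \<subseteq> banned p w J \<alpha>"
          proof -
            have iJ2: "i \<in> J - {\<alpha>}" using iJ ia assms(4) by auto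
            have "phi p w i 0 < phi p w \<alpha> 0"
            proof -
              have "0 < dd p w \<alpha> i 0" using ddt[of 0] Bn tso assms(6) by (simp add: mult_neg_pos)
              then show ?thesis using phi_less_iff[of p \<alpha> i 0 w] pw[OF iJ] pw[OF aJ'] by simp
            qed
            moreover have "w \<alpha> * p i \<noteq> w i * p \<alpha>" using Bn B_def by simp
            moreover have "tstar p w \<alpha> i \<in> {0<..<sum p J}" using tso assms(6) tste te_le ts_def by simp
            ultimately show ?thesis unfolding banned_def ts_def using iJ2 by blast
          qed
          ultimately show False using assms(16) by blast
        qed
      qed
      then show ?thesis using ia Bn B_def ts_def by simp
    qed
  qed
  have Fr1: "0 \<le> dd p w \<alpha> i t" if i: "i \<in> Jr" and t: "t\<^sub>o \<le> t" "t \<le> s" for i t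
  proof -
    define B where "B = w \<alpha> * p i - w i * p \<alpha>"
    from Fr[OF i] consider (a) "0 \<le> B" "0 \<le> dd p w \<alpha> i t\<^sub>o" | (b) "B < 0" "s < tstar p w \<alpha> i"
      unfolding B_def by blast
    then show ?thesis
    proof cases
      case a
      have "dd p w \<alpha> i t = dd p w \<alpha> i t\<^sub>o + B * (t - t\<^sub>o)" unfolding dd_lin B_def by (simp add: algebra_simps)
      moreover have "B * (t - t\<^sub>o) \<ge> 0" using a t by simp
      ultimately show ?thesis using a by simp
    next
      case b
      have "dd p w \<alpha> i t = B * (t - tstar p w \<alpha> i)" using dd_tstar[of w \<alpha> p i t] b B_def by simp
      then show ?thesis using b t by (simp add: mult_neg_neg less_imp_le)
    qed
  qed
  have Fr2: "\<not> (0 < dd p w i \<alpha> s \<or> (dd p w i \<alpha> s = 0 \<and> 0 < dd p w i \<alpha> (s+1)))" if i: "i \<in> Jr" for i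
  proof -
    define B where "B = w \<alpha> * p i - w i * p \<alpha>"
    have so: "t\<^sub>o \<le> s" proof -
      have "0 \<le> sum p Jl" using assms(11) pw by (intro sum_nonneg) (auto intro: less_imp_le)
      then show ?thesis using assms(13) by simp
    qed
    from Fr[OF i] consider (a) "0 \<le> B" "0 \<le> dd p w \<alpha> i t\<^sub>o" | (b) "B < 0" "s < tstar p w \<alpha> i"
      unfolding B_def by blast
    then show ?thesis
    proof cases
      case a
      have e: "\<And>t. dd p w \<alpha> i t = dd p w \<alpha> i t\<^sub>o + B * (t - t\<^sub>o)" unfolding dd_lin B_def by (simp add: algebra_simps)
      have "0 \<le> dd p w \<alpha> i s" "0 \<le> dd p w \<alpha> i (s+1)" using e[of s] e[of "s+1"] a so by auto
      then show ?thesis using dd_swap[of p w i \<alpha>] by auto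
    next
      case b
      have "dd p w \<alpha> i s = B * (s - tstar p w \<alpha> i)" using dd_tstar[of w \<alpha> p i s] b B_def by simp
      then have "0 < dd p w \<alpha> i s" using b by (simp add: mult_neg_neg)
      then show ?thesis using dd_swap[of p w i \<alpha>] by auto
    qed
  qed
  have Fl1: "dd p w \<alpha> j t < 0" if j: "j \<in> Jl" and t: "tstar p w \<alpha> j < t" for j t
  proof -
    define B where "B = w \<alpha> * p j - w j * p \<alpha>"
    have "B < 0" using Fl[OF j] B_def by simp
    moreover have "dd p w \<alpha> j t = B * (t - tstar p w \<alpha> j)" using dd_tstar[of w \<alpha> p j t] calculation B_def by simp
    ultimately show ?thesis using t by (simp add: mult_neg_pos)
  qed
  have Fl2: "dd p w \<alpha> j t \<le> 0" if j: "j \<in> Jl" and t: "tstar p w \<alpha> j \<le> t" for j t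
  proof -
    define B where "B = w \<alpha> * p j - w j * p \<alpha>"
    have "B < 0" using Fl[OF j] B_def by simp
    moreover have "dd p w \<alpha> j t = B * (t - tstar p w \<alpha> j)" using dd_tstar[of w \<alpha> p j t] calculation B_def by simp
    ultimately show ?thesis using t by (simp add: mult_nonpos_nonneg)
  qed
  have so: "t\<^sub>o \<le> s" proof -
      have "0 \<le> sum p Jl" using assms(11) pw by (intro sum_nonneg) (auto intro: less_imp_le)
      then show ?thesis using assms(13) by simp
    qed
  have JlJ: "Jl \<subseteq> J'" and JrJ: "Jr \<subseteq> J'" using assms(11,12) by auto
  have finl: "finite Jl" and finr: "finite Jr" using JlJ JrJ finJ' finite_subset by auto
  obtain \<sigma>l where sl: "distinct \<sigma>l" "set \<sigma>l = Jl" "nv p w J t\<^sub>o \<sigma>l"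
    using greedy[OF finl, of p w t\<^sub>o J] pw JlJ assms(6) by blast
  have s0: "0 \<le> s + p \<alpha>" using so assms(6) pw[OF aJ'] by simp
  obtain \<sigma>r where sr: "distinct \<sigma>r" "set \<sigma>r = Jr" "nv p w J (s + p \<alpha>) \<sigma>r"
    using greedy[OF finr, of p w "s + p \<alpha>" J] pw JrJ s0 by blast
  have aJl: "\<alpha> \<notin> Jl" using assms(11) by simp
  have aJr: "\<alpha> \<notin> Jr" using assms(12) Mal assms(9) by simp
  have disj: "Jl \<inter> Jr = {}" using assms(11,12) by auto
  have un: "Jl \<union> {\<alpha>} \<union> Jr = J'" using assms(11,12) aJ' by auto
  have suml: "t\<^sub>o + sum_list (map p \<sigma>l) = s" using sl assms(13) by (simp add: sum_list_distinct_conv_sum_set)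
  define \<sigma> where "\<sigma> = \<sigma>l @ \<alpha> # \<sigma>r"
  define n where "n = length \<sigma>l"
  have len: "length \<sigma> = Suc n + length \<sigma>r" unfolding \<sigma>_def n_def by simp
  have nthL: "\<And>k. k < n \<Longrightarrow> \<sigma>!k = \<sigma>l!k" unfolding \<sigma>_def n_def by (simp add: nth_append)
  have nthM: "\<sigma>!n = \<alpha>" unfolding \<sigma>_def n_def by simp
  have nthR: "\<And>k. \<sigma>!(Suc n + k) = \<sigma>r!k" unfolding \<sigma>_def n_def by (simp add: nth_append)
  have stL: "\<And>k. k \<le> n \<Longrightarrow> start_at p t\<^sub>o \<sigma> k = start_at p t\<^sub>o \<sigma>l k"
    unfolding \<sigma>_def n_def by (rule start_at_app_le)
  have stM: "start_at p t\<^sub>o \<sigma> n = s" unfolding \<sigma>_def n_def using start_at_mid suml by metis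
  have stR: "\<And>k. start_at p t\<^sub>o \<sigma> (Suc n + k) = start_at p (s + p \<alpha>) \<sigma>r k"
    unfolding \<sigma>_def n_def using start_at_right suml by metis
  have nonneg_l: "\<forall>x\<in>set \<sigma>l. p x \<ge> 0" and nonneg_r: "\<forall>x\<in>set \<sigma>r. p x \<ge> 0"
    using sl(2) sr(2) JlJ JrJ pw by (auto intro: less_imp_le)
  have dist: "distinct \<sigma>" unfolding \<sigma>_def using sl sr aJl aJr disj by auto
  have setS: "set \<sigma> = J'" unfolding \<sigma>_def using sl sr un by auto
  have nv_ok: "\<not> violates p t\<^sub>o \<sigma> i j I" if rd: "rule_dom p w J i j I" and iJ: "i \<in> J'" and jJ: "j \<in> J'" for i j I
  proof
    assume "violates p t\<^sub>o \<sigma> i j I"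
    then obtain k l where kl: "k < l" "l < length \<sigma>" "\<sigma>!k = j" "\<sigma>!l = i"
      and v1: "start_at p t\<^sub>o \<sigma> k \<in> I" and v2: "start_at p t\<^sub>o \<sigma> l - p j \<in> I"
      unfolding violates_def by blast
    have pij: "p i > 0" "p j > 0" "w i > 0" "w j > 0" using pw iJ jJ by auto
    consider (LL) "l < n" | (LM) "l = n" | (LR) "n < l" by linarith
    then show False
    proof cases
      case LL
      have "\<sigma>l!k = j" "\<sigma>l!l = i" using kl LL nthL by auto
      moreover have "start_at p t\<^sub>o \<sigma>l k \<in> I" "start_at p t\<^sub>o \<sigma>l l - p j \<in> I"
        using v1 v2 stL kl LL by auto
      ultimately show False using sl(3) rd kl LL unfolding nv_def n_def by blast
    next
      case LM
      have ia: "i = \<alpha>" using kl LM nthM by simp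
      have jl: "j \<in> Jl" using kl LM nthL sl(2) n_def by (metis nth_mem)
      have "s - p j \<in> I" using v2 LM stM by simp
      moreover have "tstar p w \<alpha> j \<le> s - p j" "t\<^sub>o < tstar p w \<alpha> j" using Fl[OF jl] by auto
      moreover have "0 \<le> s - p j" using calculation assms(6) by simp
      ultimately have "0 < dd p w \<alpha> j (s - p j) \<or> (dd p w \<alpha> j (s - p j) = 0 \<and> 0 < dd p w \<alpha> j (s - p j + 1))"
        using beats[OF rd[unfolded ia]] pij pw[OF aJ'] by blast
      moreover have "dd p w \<alpha> j (s - p j) \<le> 0" using Fl2[OF jl] \<open>tstar p w \<alpha> j \<le> s - p j\<close> by simp
      moreover have "dd p w \<alpha> j (s - p j + 1) < 0" using Fl1[OF jl] \<open>tstar p w \<alpha> j \<le> s - p j\<close> by simp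
      ultimately show False by linarith
    next
      case LR
      then obtain l' where l': "l = Suc n + l'" by (metis add_Suc less_iff_Suc_add)
      have l'len: "l' < length \<sigma>r" using kl(2) l' len by simp
      have ir: "i \<in> Jr" using kl(4) l' nthR l'len sr(2) by (metis nth_mem)
      consider (KL) "k < n" | (KM) "k = n" | (KR) "n < k" by linarith
      then show False
      proof cases
        case KM
        have ja: "j = \<alpha>" using kl KM nthM by simp
        have "s \<in> I" using v1 KM stM by simp
        then have "0 < dd p w i \<alpha> s \<or> (dd p w i \<alpha> s = 0 \<and> 0 < dd p w i \<alpha> (s+1))"
          using beats[OF rd[unfolded ja]] pij pw[OF aJ'] so assms(6) by simp
        then show False using Fr2[OF ir] by blast
      next
        case KR
        then obtain k' where k': "k = Suc n + k'" by (metis add_Suc less_iff_Suc_add)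
        have "k' < l'" "\<sigma>r!k' = j" "\<sigma>r!l' = i" using kl k' l' nthR by auto
        moreover have "start_at p (s + p \<alpha>) \<sigma>r k' \<in> I" "start_at p (s + p \<alpha>) \<sigma>r l' - p j \<in> I"
          using v1 v2 stR k' l' by auto
        ultimately show False using sr(3) rd l'len unfolding nv_def by blast
      next
        case KL
        have jl: "j \<in> Jl" using kl KL nthL sl(2) n_def by (metis nth_mem)
        define tj where "tj = start_at p t\<^sub>o \<sigma>l k"
        define ti where "ti = start_at p (s + p \<alpha>) \<sigma>r l'"
        have tjI: "tj \<in> I" using v1 stL KL tj_def by simp
        have tiI: "ti - p j \<in> I" using v2 stR l' ti_def by simp
        have "tj + p (\<sigma>l!k) \<le> t\<^sub>o + sum_list (map p \<sigma>l)"
          unfolding tj_def using start_at_end[of k \<sigma>l p t\<^sub>o] KL n_def nonneg_l by simp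
        then have tj_le: "tj \<le> s - p j" using suml kl(3) nthL KL by simp
        have ti_ge: "s + p \<alpha> \<le> ti" unfolding ti_def using start_at_ge nonneg_r by blast
        define t where "t = s - p j + min (p j) (p \<alpha>) / 2"
        have mpos: "0 < min (p j) (p \<alpha>)" using pij pw[OF aJ'] by simp
        have t1: "tj \<le> t" using tj_le mpos t_def by linarith
        have t2: "t \<le> ti - p j" using ti_ge t_def pij pw[OF aJ'] by (simp add: min_def)
        have tI: "t \<in> I" using rule_dom_convex[OF rd tjI tiI t1 t2] .
        have Flj: "tstar p w \<alpha> j \<le> s - p j" "t\<^sub>o < tstar p w \<alpha> j" using Fl[OF jl] by auto
        have tgt: "tstar p w \<alpha> j < t" using Flj mpos t_def by linarith
        have t0: "0 \<le> t" "t\<^sub>o \<le> t" using tgt Flj assms(6) by auto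
        have tle: "t \<le> s" using t_def pij pw[OF aJ'] by (simp add: min_def)
        have "0 \<le> dd p w i j t" using beats[OF rd tI t0(1) pij] by auto
        then have c1: "phi p w j t \<le> phi p w i t" using phi_le_iff[of p i j t w] pij t0 by simp
        have "dd p w \<alpha> j t < 0" using Fl1[OF jl tgt] .
        then have c2: "phi p w \<alpha> t < phi p w j t"
          using phi_less_iff[of p j \<alpha> t w] dd_swap[of p w j \<alpha> t] pij pw[OF aJ'] t0 by simp
        have "0 \<le> dd p w \<alpha> i t" using Fr1[OF ir t0(2) tle] .
        then have c3: "phi p w i t \<le> phi p w \<alpha> t" using phi_le_iff[of p \<alpha> i t w] pij pw[OF aJ'] t0 by simp
        from c1 c2 c3 show False by simp
      qed
    qed
  qed
  show ?thesis
  proof (intro exI[of _ \<sigma>] conjI)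
    show "partial_potential_schedule p w J J' t\<^sub>o \<sigma>"
      unfolding partial_potential_schedule_def partial_schedule_def using dist setS nv_ok by blast
    show "\<forall>j\<in>Jl. before \<sigma> j \<alpha>"
    proof
      fix j assume "j \<in> Jl"
      then obtain k where k: "k < n" "\<sigma>l!k = j" using sl(2) n_def by (metis in_set_conv_nth)
      then show "before \<sigma> j \<alpha>" unfolding before_def using nthL nthM len
        by (intro exI[of _ k] exI[of _ n]) auto
    qed
    show "\<exists>k<length \<sigma>. \<sigma> ! k = \<alpha> \<and> start_at p t\<^sub>o \<sigma> k = s"
      using nthM stM len by (intro exI[of _ n]) auto
    show "\<forall>j\<in>Jr. before \<sigma> \<alpha> j"
    proof
      fix j assume "j \<in> Jr"
      then obtain k where k: "k < length \<sigma>r" "\<sigma>r!k = j" using sr(2) by (metis in_set_conv_nth)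
      then show "before \<sigma> \<alpha> j" unfolding before_def using nthR nthM len
        by (intro exI[of _ n] exI[of _ "Suc n + k"]) auto
    qed
  qed
qed

end
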